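(* Let $I\subseteq\mathbb{R}_+\setminus\{0\}$ be a nonempty, non-singleton interval and let $n\in\mathbb{N}$ with $n\geq 2$. Suppose $\Phi: I\to\mathbb{R}$ satisfies $$\Phi(x)+\frac{(x+y)^n-x^n}{y^n}\Phi(y)=\Phi(y)+\frac{(x+y)^n-y^n}{x^n}\Phi(x)\qquad\text{for all } x,y\in I.$$ Then there exists $c\in\mathbb{R}$ such that $\Phi(x)=cx^n$ for all $x\in I$.
   Context: $\mathbb{R}_+$ denotes the set of nonnegative real numbers. *)

theory Defs
  imports "HOL-Analysis.Analysis"
begin

end

theory Submission
  imports Defs
begin

lemma superadd_pow:
  fixes x y :: real
  assumes "x > 0" "y > 0" "n \<ge> 2"
  shows "x ^ n + y ^ n < (x + y) ^ n"
  using assms(3)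
proof (induction n rule: dec_induct)
  case base
  then show ?case using assms by (simp add: power2_eq_square algebra_simps)
next
  case (step m)
  have "x ^ Suc m + y ^ Suc m \<le> (x + y) * (x ^ m + y ^ m)"
    using assms by (simp add: algebra_simps)
  also have "\<dots> < (x + y) * (x + y) ^ m"
    using step.IH assms by simp
  finally show ?case by simp
qed

theorem proposition2p6:
  fixes I :: "real set" and n :: nat and \<Phi> :: "real \<Rightarrow> real"
  assumes "is_interval I"
    and "I \<subseteq> {0<..}"
    and "\<exists>a\<in>I. \<exists>b\<in>I. a \<noteq> b"
    and "n \<ge> 2"
    and "\<And>x y. x \<in> I \<Longrightarrow> y \<in> I \<Longrightarrow>
           \<Phi> x + ((x + y) ^ n - x ^ n) / y ^ n * \<Phi> y
             = \<Phi> y + ((x + y) ^ n - y ^ n) / x ^ n * \<Phi> x"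
  shows "\<exists>c::real. \<forall>x\<in>I. \<Phi> x = c * x ^ n"
proof -
  obtain a where aI: "a \<in> I" using assms(3) by blast
  have a0: "a > 0" using aI assms(2) by auto
  show ?thesis
  proof (intro exI ballI)
    fix x assume xI: "x \<in> I"
    have x0: "x > 0" using xI assms(2) by auto
    define p where "p = \<Phi> x / x ^ n"
    define q where "q = \<Phi> a / a ^ n"
    have px: "\<Phi> x = p * x ^ n" using x0 by (simp add: p_def)
    have qa: "\<Phi> a = q * a ^ n" using a0 by (simp add: q_def)
    have e: "\<Phi> x + ((x + a) ^ n - x ^ n) / a ^ n * \<Phi> a
             = \<Phi> a + ((x + a) ^ n - a ^ n) / x ^ n * \<Phi> x"
      using assms(5) xI aI by blast
    have "p * x ^ n + ((x + a) ^ n - x ^ n) * q = q * a ^ n + ((x + a) ^ n - a ^ n) * p"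
      using e x0 a0 unfolding px qa by simp
    hence "(p - q) * (x ^ n + a ^ n - (x + a) ^ n) = 0"
      by (simp add: algebra_simps)
    moreover have "x ^ n + a ^ n - (x + a) ^ n \<noteq> 0"
      using superadd_pow[OF x0 a0 assms(4)] by simp
    ultimately have "p = q" by simp
    thus "\<Phi> x = \<Phi> a / a ^ n * x ^ n" using px q_def by simp
  qed
qed

end
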